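(* Let $G$ be a complete geometric graph. Then every blocker for $\mathcal{T}_{\leq 3}(G)$ is a spanning tree of $G$.
   Context: A geometric graph is a graph whose vertices are points in the plane in general position (no three collinear) and whose edges are straight segments between pairs of vertices; $G$ is complete if all pairs of vertices are joined. $\mathcal{T}_{\leq k}(G)$ denotes the family of all simple (non-crossing) spanning trees of $G$ of (graph) diameter at most $k$. A subgraph $B$ blocks a family $\mathcal{F}$ of subgraphs if it shares at least one edge with every member of $\mathcal{F}$; a blocker of $\mathcal{F}$ is a subgraph that blocks $\mathcal{F}$ and has the smallest possible number of edges among all subgraphs blocking $\mathcal{F}$. *)

theory Defs
  imports "HOL-Analysis.Analysis"
begin

type_synonym point = "real \<times> real"
type_synonym edge = "point set"

definition general_position :: "point set \<Rightarrow> bool" where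
  "general_position P \<longleftrightarrow>
     (\<forall>a\<in>P. \<forall>b\<in>P. \<forall>c\<in>P. a \<noteq> b \<and> a \<noteq> c \<and> b \<noteq> c \<longrightarrow> \<not> collinear {a, b, c})"

text \<open>Edge set of the complete geometric graph on P (edges are 2-element vertex sets,
  drawn as the straight segment convex hull e).\<close>
definition complete_edges :: "point set \<Rightarrow> edge set" where
  "complete_edges P = {{a, b} | a b. a \<in> P \<and> b \<in> P \<and> a \<noteq> b}"

definition walk :: "edge set \<Rightarrow> point list \<Rightarrow> bool" where
  "walk E xs \<longleftrightarrow> xs \<noteq> [] \<and> (\<forall>i < length xs - 1. {xs ! i, xs ! Suc i} \<in> E)"

definition connected_graph :: "point set \<Rightarrow> edge set \<Rightarrow> bool" where
  "connected_graph V E \<longleftrightarrow>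
     (\<forall>u\<in>V. \<forall>v\<in>V. \<exists>xs. walk E xs \<and> hd xs = u \<and> last xs = v)"

definition has_cycle :: "edge set \<Rightarrow> bool" where
  "has_cycle E \<longleftrightarrow>
     (\<exists>xs. walk E xs \<and> distinct xs \<and> length xs \<ge> 3 \<and> {last xs, hd xs} \<in> E)"

definition spanning_tree :: "point set \<Rightarrow> edge set \<Rightarrow> bool" where
  "spanning_tree P T \<longleftrightarrow> T \<subseteq> complete_edges P \<and> connected_graph P T \<and> \<not> has_cycle T"

definition diameter_le :: "point set \<Rightarrow> edge set \<Rightarrow> nat \<Rightarrow> bool" where
  "diameter_le V E k \<longleftrightarrow>
     (\<forall>u\<in>V. \<forall>v\<in>V. \<exists>xs. walk E xs \<and> hd xs = u \<and> last xs = v \<and> length xs \<le> k + 1)"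

definition non_crossing :: "edge set \<Rightarrow> bool" where
  "non_crossing E \<longleftrightarrow>
     (\<forall>e\<in>E. \<forall>f\<in>E. e \<noteq> f \<longrightarrow> convex hull e \<inter> convex hull f \<subseteq> e \<inter> f)"

definition simple_trees_diam_le :: "point set \<Rightarrow> nat \<Rightarrow> edge set set" where
  "simple_trees_diam_le P k =
     {T. spanning_tree P T \<and> non_crossing T \<and> diameter_le P T k}"

definition blocks :: "edge set set \<Rightarrow> edge set \<Rightarrow> bool" where
  "blocks F B \<longleftrightarrow> (\<forall>T\<in>F. B \<inter> T \<noteq> {})"

definition is_blocker :: "point set \<Rightarrow> edge set set \<Rightarrow> edge set \<Rightarrow> bool" where
  "is_blocker P F B \<longleftrightarrow>
     B \<subseteq> complete_edges P \<and> blocks F B \<and>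
     (\<forall>B'. B' \<subseteq> complete_edges P \<and> blocks F B' \<longrightarrow> card B \<le> card B')"

end

theory Submission
  imports Defs
begin


section \<open>Walks\<close>

lemma aux_idx: "(\<forall>i<length xs - 1. P i) \<longleftrightarrow> (\<forall>i. Suc i < length xs \<longrightarrow> P i)"
  by (auto simp: less_diff_conv)

lemma walk_succ: "walk E xs \<longleftrightarrow> xs \<noteq> [] \<and> successively (\<lambda>a b. {a,b} \<in> E) xs"
  unfolding walk_def successively_conv_nth aux_idx ..

lemma walk_single[simp]: "walk E [a]"
  by (simp add: walk_succ)

lemma walk_Cons2: "walk E (a # b # xs) \<longleftrightarrow> {a,b} \<in> E \<and> walk E (b # xs)"
  by (simp add: walk_succ)

lemma walk_append: "walk E xs \<Longrightarrow> walk E ys \<Longrightarrow> {last xs, hd ys} \<in> E \<Longrightarrow> walk E (xs @ ys)"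
  by (auto simp: walk_succ successively_append_iff)

lemma walk_rev: "walk E xs \<Longrightarrow> walk E (rev xs)"
  unfolding walk_succ by (auto intro: successively_mono simp: insert_commute)

lemma walk_tl: "walk E xs \<Longrightarrow> tl xs \<noteq> [] \<Longrightarrow> walk E (tl xs)"
proof -
  assume a: "walk E xs" "tl xs \<noteq> []"
  then obtain y ys where "xs = y # ys" by (cases xs) auto
  with a show ?thesis by (simp add: walk_succ successively_Cons)
qed

lemma walk_join:
  assumes "walk E xs" "walk E ys" "last xs = hd ys"
  shows "walk E (xs @ tl ys)"
proof (cases "tl ys = []")
  case True then show ?thesis using assms by simp
next
  case False
  obtain a b zs where ys: "ys = a # b # zs" using False by (cases ys; cases "tl ys") auto
  have "{hd ys, hd (tl ys)} \<in> E" using assms(2) unfolding ys by (simp add: walk_Cons2)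
  moreover have "walk E (tl ys)" using walk_tl[OF assms(2) False] .
  ultimately show ?thesis using assms False walk_append[of E xs "tl ys"] by simp
qed

lemma last_join: "ys \<noteq> [] \<Longrightarrow> xs \<noteq> [] \<Longrightarrow> last xs = hd ys \<Longrightarrow> last (xs @ tl ys) = last ys"
  by (cases ys) auto

lemma walk_mono: "walk E xs \<Longrightarrow> (\<And>i. Suc i < length xs \<Longrightarrow> {xs!i, xs!Suc i} \<in> E') \<Longrightarrow> walk E' xs"
  unfolding walk_succ successively_conv_nth by blast

lemma walk_step: "walk E xs \<Longrightarrow> Suc i < length xs \<Longrightarrow> {xs!i, xs!Suc i} \<in> E"
  unfolding walk_succ successively_conv_nth by blast

lemma walk_first_edge:
  assumes "walk E xs" "hd xs \<noteq> last xs"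
  shows "{hd xs, xs!1} \<in> E"
proof -
  have "xs \<noteq> []" using assms(1) by (simp add: walk_def)
  have "length xs \<noteq> 1" using assms(2) \<open>xs \<noteq> []\<close>
    by (cases xs) auto
  then have "Suc 0 < length xs" using \<open>xs \<noteq> []\<close> by (cases xs) auto
  from walk_step[OF assms(1) this] show ?thesis using \<open>xs \<noteq> []\<close> by (simp add: hd_conv_nth)
qed

section \<open>Cycles\<close>

lemma cyc_nbrs:
  assumes w: "walk E xs" and d: "distinct xs" and l: "length xs \<ge> 3"
    and cl: "{last xs, hd xs} \<in> E" and i: "i < length xs"
  shows "\<exists>a b. a \<noteq> b \<and> {xs!i, a} \<in> E \<and> {xs!i, b} \<in> E"
proof -
  let ?n = "length xs"
  have ne: "xs \<noteq> []" using l by auto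
  have lastn: "last xs = xs ! (?n - 1)" using ne by (simp add: last_conv_nth)
  have hdn: "hd xs = xs ! 0" using ne by (simp add: hd_conv_nth)
  have neq: "\<And>j k. j < ?n \<Longrightarrow> k < ?n \<Longrightarrow> j \<noteq> k \<Longrightarrow> xs!j \<noteq> xs!k"
    using d by (simp add: nth_eq_iff_index_eq)
  show ?thesis
  proof (cases "i = 0")
    case True
    have "{xs!0, xs!Suc 0} \<in> E" using walk_step[OF w, of 0] l by simp
    moreover have "{xs!0, xs!(?n - 1)} \<in> E" using cl lastn hdn by (simp add: insert_commute)
    moreover have "xs!Suc 0 \<noteq> xs!(?n - 1)" using neq l by simp
    ultimately show ?thesis using True by blast
  next
    case False
    note i0 = False
    show ?thesis
    proof (cases "i = ?n - 1")
      case True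
      have "{xs!(i - 1), xs!Suc (i - 1)} \<in> E" using walk_step[OF w, of "i - 1"] i i0 by simp
      then have "{xs!i, xs!(i - 1)} \<in> E" using i0 by (simp add: insert_commute)
      moreover have "{xs!i, xs!0} \<in> E" using cl lastn hdn True by simp
      moreover have "xs!(i - 1) \<noteq> xs!0" using neq[of "i - 1" 0] l True ne by simp
      ultimately show ?thesis by blast
    next
      case False
      have "{xs!(i - 1), xs!Suc (i - 1)} \<in> E" using walk_step[OF w, of "i - 1"] i i0 by simp
      then have "{xs!i, xs!(i - 1)} \<in> E" using i0 by (simp add: insert_commute)
      moreover have "{xs!i, xs!Suc i} \<in> E" using walk_step[OF w, of i] i False by simp
      moreover have "xs!(i - 1) \<noteq> xs!Suc i" using neq i False i0 by simp
      ultimately show ?thesis by blast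
    qed
  qed
qed

section \<open>Degrees\<close>

lemma finite_complete_edges: "finite V \<Longrightarrow> finite (complete_edges V)"
proof -
  assume "finite V"
  have "complete_edges V \<subseteq> (\<lambda>(a,b). {a,b}) ` (V \<times> V)"
    unfolding complete_edges_def by auto
  then show ?thesis using \<open>finite V\<close> by (meson finite_SigmaI finite_imageI finite_subset)
qed

lemma complete_edgeE:
  assumes "e \<in> complete_edges V"
  obtains a b where "e = {a,b}" "a \<in> V" "b \<in> V" "a \<noteq> b"
  using assms unfolding complete_edges_def by auto

lemma card_edge: "e \<in> complete_edges V \<Longrightarrow> card e = 2"
  by (erule complete_edgeE) auto

lemma handshake:
  assumes fV: "finite V" and EV: "E \<subseteq> complete_edges V"
  shows "(\<Sum>v\<in>V. card {e\<in>E. v\<in>e}) = 2 * card E"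
proof -
  have fE: "finite E" using finite_complete_edges[OF fV] EV finite_subset by blast
  have "(\<Sum>v\<in>V. card {e\<in>E. v\<in>e}) = (\<Sum>v\<in>V. \<Sum>e\<in>E. if v \<in> e then 1 else 0)"
    using fE by (simp add: sum.inter_filter[symmetric])
  also have "\<dots> = (\<Sum>e\<in>E. \<Sum>v\<in>V. if v \<in> e then 1 else 0)"
    by (rule sum.swap)
  also have "\<dots> = (\<Sum>e\<in>E. 2)"
  proof (rule sum.cong[OF refl])
    fix e assume "e \<in> E"
    then have eV: "e \<in> complete_edges V" using EV by auto
    then have "e \<subseteq> V" by (auto elim: complete_edgeE)
    have "(\<Sum>v\<in>V. if v \<in> e then 1 else 0) = card {v\<in>V. v \<in> e}"
      using fV by (simp add: sum.inter_filter[symmetric])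
    also have "{v\<in>V. v \<in> e} = e" using \<open>e \<subseteq> V\<close> by auto
    finally show "(\<Sum>v\<in>V. if v \<in> e then 1 else 0) = (2::nat)" using card_edge[OF eV] by simp
  qed
  finally show ?thesis by simp
qed

lemma low_degree:
  assumes fV: "finite V" and EV: "E \<subseteq> complete_edges V" and c: "card E < card V"
  shows "\<exists>v\<in>V. card {e\<in>E. v\<in>e} \<le> 1"
proof (rule ccontr)
  assume "\<not> ?thesis"
  then have "\<forall>v\<in>V. 2 \<le> card {e\<in>E. v\<in>e}" by auto
  then have "(\<Sum>v\<in>V. (2::nat)) \<le> (\<Sum>v\<in>V. card {e\<in>E. v\<in>e})" by (intro sum_mono) auto
  then have "2 * card V \<le> 2 * card E" using handshake[OF fV EV] by simp
  then show False using c by simp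
qed



lemma leaf_nb:
  assumes uniq: "\<forall>e\<in>E. v \<in> e \<longrightarrow> e = {v, v'}" and vv: "v \<noteq> v'" and z: "{v, z} \<in> E"
  shows "z = v'"
proof -
  have "{v,z} = {v,v'}" using uniq z by auto
  then show ?thesis using vv by (auto simp: doubleton_eq_iff)
qed

lemma conn_cycle:
  assumes "finite V" "E \<subseteq> complete_edges V" "connected_graph V E" "has_cycle E"
  shows "card V \<le> card E"
  using assms
proof (induct "card V" arbitrary: V E rule: less_induct)
  case less
  note fV = less.prems(1) and EV = less.prems(2) and con = less.prems(3) and cyc = less.prems(4)
  have fE: "finite E" using finite_complete_edges[OF fV] EV finite_subset by blast
  show ?case
  proof (rule ccontr)
    assume "\<not> card V \<le> card E"
    then have cEV: "card E < card V" by simp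
    obtain v where vV: "v \<in> V" and dv: "card {e\<in>E. v\<in>e} \<le> 1"
      using low_degree[OF fV EV cEV] by blast
    obtain cs where cs: "walk E cs" "distinct cs" "length cs \<ge> 3" "{last cs, hd cs} \<in> E"
      using cyc unfolding has_cycle_def by blast
    obtain e1 where e1: "e1 \<in> E" using cs(4) by blast
    then obtain a b where ab: "e1 = {a,b}" "a \<in> V" "b \<in> V" "a \<noteq> b"
      using EV complete_edgeE[of e1 V] by blast
    have "\<exists>w. w \<in> V \<and> w \<noteq> v"
    proof (cases "a = v")
      case True then show ?thesis using ab by blast
    next
      case False then show ?thesis using ab by blast
    qed
    then obtain w where wV: "w \<in> V" and wv: "w \<noteq> v" by blast
    obtain xs where xs: "walk E xs" "hd xs = v" "last xs = w"
      using con vV wV unfolding connected_graph_def by blast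
    have "{v, xs!1} \<in> E" using walk_first_edge[OF xs(1)] xs wv by simp
    then have "{v, xs!1} \<in> {e\<in>E. v\<in>e}" by simp
    then have "{e\<in>E. v\<in>e} \<noteq> {}" by blast
    moreover have "finite {e\<in>E. v\<in>e}" using fE by simp
    ultimately have "card {e\<in>E. v\<in>e} \<noteq> 0" by simp
    with dv have "card {e\<in>E. v\<in>e} = 1" by arith
    then obtain e0 where e0: "{e\<in>E. v\<in>e} = {e0}" using card_1_singletonE by blast
    then have e0E: "e0 \<in> E" and ve0: "v \<in> e0" by auto
    have uniq0: "\<forall>e\<in>E. v \<in> e \<longrightarrow> e = e0" using e0 by auto
    obtain v' where e0v: "e0 = {v, v'}" and v'V: "v' \<in> V" and vv: "v \<noteq> v'"
    proof -
      from e0E EV obtain p r where "e0 = {p,r}" "p \<in> V" "r \<in> V" "p \<noteq> r" using complete_edgeE[of e0 V] by blast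
      then have "\<exists>v'. e0 = {v, v'} \<and> v' \<in> V \<and> v \<noteq> v'"
      proof (cases "v = p")
        case True then show ?thesis using \<open>e0 = {p,r}\<close> \<open>r \<in> V\<close> \<open>p \<noteq> r\<close> by blast
      next
        case False then have "v = r" using ve0 \<open>e0 = {p,r}\<close> by blast
        then show ?thesis using \<open>e0 = {p,r}\<close> \<open>p \<in> V\<close> \<open>p \<noteq> r\<close> by (metis insert_commute)
      qed
      then show ?thesis using that by blast
    qed
    have uniq: "\<forall>e\<in>E. v \<in> e \<longrightarrow> e = {v, v'}" using uniq0 e0v by auto
    have nb: "\<And>z. {v, z} \<in> E \<Longrightarrow> z = v'" using leaf_nb[OF uniq vv] by blast
    have nb': "\<And>z. {z, v} \<in> E \<Longrightarrow> z = v'" using nb by (simp add: insert_commute)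
    define V' where "V' = V - {v}"
    define E' where "E' = E - {e0}"
    have EV': "E' \<subseteq> complete_edges V'"
    proof
      fix e assume "e \<in> E'"
      then have "e \<in> E" "e \<noteq> e0" by (auto simp: E'_def)
      then have "v \<notin> e" using uniq0 by auto
      from \<open>e \<in> E\<close> EV obtain p r where "e = {p,r}" "p \<in> V" "r \<in> V" "p \<noteq> r" using complete_edgeE[of e V] by blast
      then have "p \<in> V'" "r \<in> V'" using \<open>v \<notin> e\<close> unfolding V'_def by auto
      then show "e \<in> complete_edges V'" using \<open>e = {p,r}\<close> \<open>p \<noteq> r\<close> unfolding complete_edges_def by blast
    qed
    have avoid: "walk E' ys" if "walk E ys" "v \<notin> set ys" for ys
    proof (rule walk_mono[OF that(1)])
      fix i assume "Suc i < length ys"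
      then have "{ys!i, ys!Suc i} \<in> E" using walk_step[OF that(1)] by blast
      moreover have "v \<notin> {ys!i, ys!Suc i}" using that(2) \<open>Suc i < length ys\<close>
        using nth_mem[of i ys] nth_mem[of "Suc i" ys] by auto
      ultimately show "{ys!i, ys!Suc i} \<in> E'" using ve0 by (auto simp: E'_def)
    qed
    have con': "connected_graph V' E'"
      unfolding connected_graph_def
    proof (intro ballI)
      fix u w assume u: "u \<in> V'" and w: "w \<in> V'"
      let ?P = "\<lambda>ys. walk E ys \<and> hd ys = u \<and> last ys = w"
      have "\<exists>ys. ?P ys" using con u w unfolding connected_graph_def V'_def by blast
      then obtain ys where "?P ys" by blast
      then obtain zs where zs: "?P zs" and mn: "\<And>ys. ?P ys \<Longrightarrow> length zs \<le> length ys"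
        using ex_has_least_nat[of ?P ys length] by blast
      have "v \<notin> set zs"
      proof
        assume "v \<in> set zs"
        then obtain as bs where sp: "zs = as @ v # bs" by (meson split_list)
        have uv: "u \<noteq> v" "w \<noteq> v" using u w by (auto simp: V'_def)
        have asn: "as \<noteq> []" using zs sp uv by auto
        have bsn: "bs \<noteq> []" using zs sp uv by auto
        have sz: "successively (\<lambda>a b. {a,b} \<in> E) (as @ v # bs)" using zs sp by (simp add: walk_succ)
        then have s1: "successively (\<lambda>a b. {a,b} \<in> E) as" and s2: "successively (\<lambda>a b. {a,b} \<in> E) (v # bs)"
          and j1: "{last as, v} \<in> E"
          using asn by (auto simp: successively_append_iff)
        have j2: "{v, hd bs} \<in> E" using s2 bsn by (cases bs) auto
        have s3: "successively (\<lambda>a b. {a,b} \<in> E) bs" using s2 by (cases bs) auto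
        have la: "last as = v'" using nb' j1 .
        have hb: "hd bs = v'" using nb j2 .
        have wa: "walk E as" using s1 asn by (simp add: walk_succ)
        have wb: "walk E bs" using s3 bsn by (simp add: walk_succ)
        have wn: "walk E (as @ tl bs)" using walk_join[OF wa wb] la hb by simp
        have "hd (as @ tl bs) = u" using zs sp asn by simp
        moreover have "last (as @ tl bs) = w" using last_join[OF bsn asn] la hb zs sp bsn by simp
        ultimately have "length zs \<le> length (as @ tl bs)" using mn wn by blast
        then show False using sp bsn by (cases bs) auto
      qed
      then show "\<exists>ys. walk E' ys \<and> hd ys = u \<and> last ys = w" using avoid zs by blast
    qed
    have cyc': "has_cycle E'"
    proof -
      have "v \<notin> set cs"
      proof
        assume "v \<in> set cs"
        then obtain i where i: "i < length cs" "cs!i = v" by (meson in_set_conv_nth)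
        from cyc_nbrs[OF cs i(1)] obtain p r where "p \<noteq> r" "{v,p} \<in> E" "{v,r} \<in> E" using i by auto
        then show False using nb[of p] nb[of r] by simp
      qed
      then have "walk E' cs" using avoid cs(1) by blast
      moreover have "{last cs, hd cs} \<in> E'"
      proof -
        have "cs \<noteq> []" using cs(3) by auto
        then have "last cs \<in> set cs" "hd cs \<in> set cs" by auto
        then have "v \<notin> {last cs, hd cs}" using \<open>v \<notin> set cs\<close> by auto
        then show ?thesis using cs(4) ve0 by (auto simp: E'_def)
      qed
      ultimately show ?thesis using cs unfolding has_cycle_def by blast
    qed
    have fV': "finite V'" using fV by (simp add: V'_def)
    have lt: "card V' < card V" unfolding V'_def using card_Diff1_less[OF fV vV] .
    have "card V' \<le> card E'" using less.hyps[OF lt fV' EV' con' cyc'] .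
    moreover have "card V' = card V - 1" using vV fV by (simp add: V'_def)
    moreover have "card E' = card E - 1" using e0E fE by (simp add: E'_def)
    moreover have "card E \<ge> 1" using e0E fE card_gt_0_iff[of E] by auto
    ultimately show False using cEV by linarith
  qed
qed



definition dstar :: "point \<Rightarrow> point \<Rightarrow> point set \<Rightarrow> point set \<Rightarrow> edge set" where
  "dstar c d Lc Ld = insert {c,d} ((\<lambda>p. {c,p}) ` Lc \<union> (\<lambda>p. {d,p}) ` Ld)"

locale DS =
  fixes P :: "point set" and c d :: point and Lc Ld :: "point set"
  assumes cP: "c \<in> P" and dP: "d \<in> P" and cd: "c \<noteq> d"
    and LU: "Lc \<union> Ld = P - {c,d}" and LI: "Lc \<inter> Ld = {}"
begin

abbreviation "T \<equiv> dstar c d Lc Ld"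

lemma LcP: "p \<in> Lc \<Longrightarrow> p \<in> P \<and> p \<noteq> c \<and> p \<noteq> d" using LU by blast
lemma LdP: "p \<in> Ld \<Longrightarrow> p \<in> P \<and> p \<noteq> c \<and> p \<noteq> d" using LU by blast

lemma T_sub: "T \<subseteq> complete_edges P"
  unfolding dstar_def complete_edges_def using cP dP cd LcP LdP by blast

lemma edge_cd: "{c,d} \<in> T" unfolding dstar_def by simp
lemma edge_c: "p \<in> Lc \<Longrightarrow> {p,c} \<in> T" unfolding dstar_def by (auto simp: insert_commute)
lemma edge_d: "p \<in> Ld \<Longrightarrow> {p,d} \<in> T" unfolding dstar_def by (auto simp: insert_commute)

lemma to_c: "u \<in> insert c Lc \<Longrightarrow> \<exists>xs. walk T xs \<and> hd xs = u \<and> last xs = c \<and> length xs \<le> 2"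
proof -
  assume u: "u \<in> insert c Lc"
  show ?thesis
  proof (cases "u = c")
    case True then show ?thesis by (intro exI[of _ "[c]"]) simp
  next
    case False then have "u \<in> Lc" using u by simp
    then show ?thesis using edge_c by (intro exI[of _ "[u,c]"]) (simp add: walk_Cons2)
  qed
qed

lemma to_d: "u \<in> insert d Ld \<Longrightarrow> \<exists>xs. walk T xs \<and> hd xs = u \<and> last xs = d \<and> length xs \<le> 2"
proof -
  assume u: "u \<in> insert d Ld"
  show ?thesis
  proof (cases "u = d")
    case True then show ?thesis by (intro exI[of _ "[d]"]) simp
  next
    case False then have "u \<in> Ld" using u by simp
    then show ?thesis using edge_d by (intro exI[of _ "[u,d]"]) (simp add: walk_Cons2)
  qed
qed

lemma comb_same:
  assumes "walk E xs" "hd xs = u" "last xs = z" "length xs \<le> 2"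
    "walk E ys" "hd ys = v" "last ys = z" "length ys \<le> 2"
  shows "\<exists>zs. walk E zs \<and> hd zs = u \<and> last zs = v \<and> length zs \<le> 4"
proof -
  have ne: "xs \<noteq> []" "ys \<noteq> []" using assms by (auto simp: walk_def)
  have "walk E (xs @ tl (rev ys))" using walk_join[OF assms(1) walk_rev[OF assms(5)]] assms ne
    by (simp add: hd_rev)
  moreover have "hd (xs @ tl (rev ys)) = u" using ne assms by simp
  moreover have "last (xs @ tl (rev ys)) = v"
    using last_join[of "rev ys" xs] ne assms by (simp add: hd_rev last_rev)
  moreover have "length (xs @ tl (rev ys)) \<le> 4" using assms by simp
  ultimately show ?thesis by blast
qed

lemma comb_cross:
  assumes "walk E xs" "hd xs = u" "last xs = z1" "length xs \<le> 2"
    "walk E ys" "hd ys = v" "last ys = z2" "length ys \<le> 2" "{z1, z2} \<in> E"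
  shows "\<exists>zs. walk E zs \<and> hd zs = u \<and> last zs = v \<and> length zs \<le> 4"
proof -
  have ne: "xs \<noteq> []" "ys \<noteq> []" using assms by (auto simp: walk_def)
  have "walk E (xs @ rev ys)" using walk_append[OF assms(1) walk_rev[OF assms(5)]] assms ne
    by (simp add: hd_rev)
  moreover have "hd (xs @ rev ys) = u" using ne assms by simp
  moreover have "last (xs @ rev ys) = v" using ne assms by (simp add: last_rev)
  moreover have "length (xs @ rev ys) \<le> 4" using assms by simp
  ultimately show ?thesis by blast
qed

lemma T_diam: "diameter_le P T 3"
  unfolding diameter_le_def
proof (intro ballI)
  fix u v assume u: "u \<in> P" and v: "v \<in> P"
  have side: "\<And>w. w \<in> P \<Longrightarrow> w \<in> insert c Lc \<or> w \<in> insert d Ld" using LU by blast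
  have cdT: "{c,d} \<in> T" "{d,c} \<in> T" using edge_cd by (auto simp: insert_commute)
  have "\<exists>zs. walk T zs \<and> hd zs = u \<and> last zs = v \<and> length zs \<le> 4"
  proof (cases "u \<in> insert c Lc")
    case uc: True
    then obtain xs where xs: "walk T xs" "hd xs = u" "last xs = c" "length xs \<le> 2" using to_c by blast
    show ?thesis
    proof (cases "v \<in> insert c Lc")
      case True
      then obtain ys where "walk T ys" "hd ys = v" "last ys = c" "length ys \<le> 2" using to_c by blast
      then show ?thesis using comb_same[OF xs] by blast
    next
      case False then have "v \<in> insert d Ld" using side v by blast
      then obtain ys where "walk T ys" "hd ys = v" "last ys = d" "length ys \<le> 2" using to_d by blast
      then show ?thesis using comb_cross[OF xs] cdT by blast
    qed
  next
    case False then have ud: "u \<in> insert d Ld" using side u by blast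
    then obtain xs where xs: "walk T xs" "hd xs = u" "last xs = d" "length xs \<le> 2" using to_d by blast
    show ?thesis
    proof (cases "v \<in> insert c Lc")
      case True
      then obtain ys where "walk T ys" "hd ys = v" "last ys = c" "length ys \<le> 2" using to_c by blast
      then show ?thesis using comb_cross[OF xs] cdT by blast
    next
      case False then have "v \<in> insert d Ld" using side v by blast
      then obtain ys where "walk T ys" "hd ys = v" "last ys = d" "length ys \<le> 2" using to_d by blast
      then show ?thesis using comb_same[OF xs] by blast
    qed
  qed
  then show "\<exists>xs. walk T xs \<and> hd xs = u \<and> last xs = v \<and> length xs \<le> 3 + 1" by simp
qed

lemma T_conn: "connected_graph P T"
  using T_diam unfolding diameter_le_def connected_graph_def by blast

lemma edge_cases:
  assumes "e \<in> T"
  shows "e = {c,d} \<or> (\<exists>p\<in>Lc. e = {c,p}) \<or> (\<exists>p\<in>Ld. e = {d,p})"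
  using assms unfolding dstar_def by blast

lemma two_nbrs:
  assumes a: "{w,a} \<in> T" and b: "{w,b} \<in> T" and ab: "a \<noteq> b"
  shows "w = c \<or> w = d"
proof (rule ccontr)
  assume wn: "\<not> (w = c \<or> w = d)"
  have ca: "(w \<in> Lc \<and> a = c) \<or> (w \<in> Ld \<and> a = d)" if "{w,a} \<in> T" for a
  proof -
    from edge_cases[OF that] show ?thesis
    proof (elim disjE bexE)
      assume "{w,a} = {c,d}" then show ?thesis using wn by (auto simp: doubleton_eq_iff)
    next
      fix p assume "p \<in> Lc" "{w,a} = {c,p}" then show ?thesis using wn by (auto simp: doubleton_eq_iff)
    next
      fix p assume "p \<in> Ld" "{w,a} = {d,p}" then show ?thesis using wn by (auto simp: doubleton_eq_iff)
    qed
  qed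
  from ca[OF a] ca[OF b] LI ab show False by blast
qed

lemma T_acyclic: "\<not> has_cycle T"
proof
  assume "has_cycle T"
  then obtain xs where xs: "walk T xs" "distinct xs" "length xs \<ge> 3" "{last xs, hd xs} \<in> T"
    unfolding has_cycle_def by blast
  have h: "xs!i \<in> {c,d}" if "i < length xs" for i
    using cyc_nbrs[OF xs that] two_nbrs by blast
  have l: "0 < length xs" "1 < length xs" "2 < length xs" using xs(3) by auto
  have "xs!0 \<in> {c,d}" by (rule h[OF l(1)])
  moreover have "xs!1 \<in> {c,d}" by (rule h[OF l(2)])
  moreover have "xs!2 \<in> {c,d}" by (rule h[OF l(3)])
  moreover have "xs!0 \<noteq> xs!1" "xs!0 \<noteq> xs!2" "xs!1 \<noteq> xs!2"
    using nth_eq_iff_index_eq[OF xs(2) l(1) l(2)] nth_eq_iff_index_eq[OF xs(2) l(1) l(3)]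
      nth_eq_iff_index_eq[OF xs(2) l(2) l(3)] by auto
  ultimately show False by auto
qed

lemma T_spanning: "spanning_tree P T"
  unfolding spanning_tree_def using T_sub T_conn T_acyclic by blast

end



lemma col_of:
  fixes x q p :: "'a::real_vector"
  assumes "p - x = k *\<^sub>R (q - x)"
  shows "collinear {x, q, p}"
proof -
  have "collinear {0, q - x, p - x}" unfolding collinear_lemma using assms by blast
  moreover have "collinear {q, x, p} \<longleftrightarrow> collinear {0, q - x, p - x}"
    by (rule collinear_3) (simp add: NO_MATCH_def)
  moreover have "{x,q,p} = {q,x,p}" by auto
  ultimately show ?thesis by simp
qed

lemma gpD: "general_position P \<Longrightarrow> a \<in> P \<Longrightarrow> b \<in> P \<Longrightarrow> c \<in> P \<Longrightarrow> a \<noteq> b \<Longrightarrow> a \<noteq> c \<Longrightarrow> b \<noteq> c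
  \<Longrightarrow> \<not> collinear {a,b,c}"
  unfolding general_position_def by blast

lemma seg_inter:
  fixes a b c :: "'a::real_vector"
  assumes nc: "\<not> collinear {a,b,c}"
  shows "closed_segment a b \<inter> closed_segment a c \<subseteq> {a}"
proof
  fix z assume z: "z \<in> closed_segment a b \<inter> closed_segment a c"
  then obtain s where s: "z = (1 - s) *\<^sub>R a + s *\<^sub>R b" by (auto simp: in_segment)
  from z obtain t where t: "z = (1 - t) *\<^sub>R a + t *\<^sub>R c" by (auto simp: in_segment)
  have zs: "z - a = s *\<^sub>R (b - a)" using s by (simp add: algebra_simps)
  have zt: "z - a = t *\<^sub>R (c - a)" using t by (simp add: algebra_simps)
  show "z \<in> {a}"
  proof (rule ccontr)
    assume "z \<notin> {a}"
    then have za: "z - a \<noteq> 0" by simp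
    then have t0: "t \<noteq> 0" using zt by auto
    have "c - a = (1/t) *\<^sub>R (t *\<^sub>R (c - a))" using t0 by simp
    also have "\<dots> = (1/t) *\<^sub>R (s *\<^sub>R (b - a))" using zs zt by simp
    also have "\<dots> = (s/t) *\<^sub>R (b - a)" by simp
    finally have "collinear {a, b, c}" by (rule col_of)
    with nc show False by simp
  qed
qed

lemma hull2: "convex hull {a,b} = closed_segment a b"
  by (simp add: segment_convex_hull)

lemma apex:
  assumes gp: "general_position P" and "a \<in> P" "y1 \<in> P" "y2 \<in> P" "a \<noteq> y1" "a \<noteq> y2" "y1 \<noteq> y2"
  shows "convex hull {a,y1} \<inter> convex hull {a,y2} \<subseteq> {a,y1} \<inter> {a,y2}"
proof -
  have "\<not> collinear {a,y1,y2}" using gpD[OF gp] assms by blast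
  then have "closed_segment a y1 \<inter> closed_segment a y2 \<subseteq> {a}" by (rule seg_inter)
  then show ?thesis unfolding hull2 by auto
qed

context DS
begin

lemma edge_cases2:
  assumes "e \<in> T"
  shows "(\<exists>y\<in>insert d Lc. e = {c,y}) \<or> (\<exists>y\<in>insert c Ld. e = {d,y})"
  using edge_cases[OF assms] by blast

lemma T_noncross:
  assumes gp: "general_position P"
    and sep: "\<forall>p\<in>Lc. \<forall>s\<in>Ld. closed_segment c p \<inter> closed_segment d s = {}"
  shows "non_crossing T"
proof -
  have mixed: "convex hull e \<inter> convex hull f \<subseteq> e \<inter> f"
    if ef: "e \<noteq> f" and y1: "y1 \<in> insert d Lc" and e: "e = {c,y1}"
       and y2: "y2 \<in> insert c Ld" and f: "f = {d,y2}" for e f y1 y2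
  proof (cases "y1 = d")
    case True
    then have y2c: "y2 \<noteq> c" using ef e f by (auto simp: insert_commute)
    then have "y2 \<in> Ld" using y2 by simp
    then have "y2 \<in> P" "y2 \<noteq> d" using LdP by auto
    then have "convex hull {d,c} \<inter> convex hull {d,y2} \<subseteq> {d,c} \<inter> {d,y2}"
      using apex[OF gp dP cP] cd y2c by auto
    then show ?thesis using e f True by (simp add: insert_commute)
  next
    case False
    then have y1L: "y1 \<in> Lc" using y1 by simp
    show ?thesis
    proof (cases "y2 = c")
      case True
      have "y1 \<in> P" "y1 \<noteq> c" "y1 \<noteq> d" using LcP[OF y1L] by auto
      then have "convex hull {c,y1} \<inter> convex hull {c,d} \<subseteq> {c,y1} \<inter> {c,d}"
        using apex[OF gp cP _ dP] cd by auto
      then show ?thesis using e f True by (simp add: insert_commute)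
    next
      case False
      then have "y2 \<in> Ld" using y2 by simp
      then have "closed_segment c y1 \<inter> closed_segment d y2 = {}" using sep y1L by blast
      then show ?thesis using e f by (simp add: hull2)
    qed
  qed
  show ?thesis
    unfolding non_crossing_def
  proof (intro ballI impI)
    fix e f assume eT: "e \<in> T" and fT: "f \<in> T" and ef: "e \<noteq> f"
    from edge_cases2[OF eT] edge_cases2[OF fT]
    show "convex hull e \<inter> convex hull f \<subseteq> e \<inter> f"
    proof (elim disjE bexE)
      fix y1 y2 assume y1: "y1 \<in> insert d Lc" "e = {c, y1}" and y2: "y2 \<in> insert d Lc" "f = {c, y2}"
      have "y1 \<noteq> y2" using ef y1 y2 by auto
      moreover have "y1 \<in> P \<and> y1 \<noteq> c" using y1(1) LcP[of y1] dP cd by blast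
      moreover have "y2 \<in> P \<and> y2 \<noteq> c" using y2(1) LcP[of y2] dP cd by blast
      ultimately show ?thesis using apex[OF gp cP, of y1 y2] y1 y2 by auto
    next
      fix y1 y2 assume y1: "y1 \<in> insert d Lc" "e = {c, y1}" and y2: "y2 \<in> insert c Ld" "f = {d, y2}"
      show ?thesis using mixed[OF ef y1 y2] .
    next
      fix y1 y2 assume y1: "y1 \<in> insert c Ld" "e = {d, y1}" and y2: "y2 \<in> insert d Lc" "f = {c, y2}"
      have "convex hull f \<inter> convex hull e \<subseteq> f \<inter> e" using mixed[OF _ y2 y1] ef by auto
      then show ?thesis by auto
    next
      fix y1 y2 assume y1: "y1 \<in> insert c Ld" "e = {d, y1}" and y2: "y2 \<in> insert c Ld" "f = {d, y2}"
      have "y1 \<noteq> y2" using ef y1 y2 by auto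
      moreover have "y1 \<in> P \<and> y1 \<noteq> d" using y1(1) LdP[of y1] cP cd by blast
      moreover have "y2 \<in> P \<and> y2 \<noteq> d" using y2(1) LdP[of y2] cP cd by blast
      ultimately show ?thesis using apex[OF gp dP, of y1 y2] y1 y2 by auto
    qed
  qed
qed

lemma T_in:
  assumes gp: "general_position P"
    and sep: "\<forall>p\<in>Lc. \<forall>s\<in>Ld. closed_segment c p \<inter> closed_segment d s = {}"
  shows "T \<in> simple_trees_diam_le P 3"
  unfolding simple_trees_diam_le_def using T_spanning T_noncross[OF gp sep] T_diam by blast

end



definition cone :: "point \<Rightarrow> point \<Rightarrow> point \<Rightarrow> point set" where
  "cone x xp q = {z. \<exists>a b. 0 < a \<and> 0 < b \<and> z = x + a *\<^sub>R (xp - x) + b *\<^sub>R (q - x)}"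

lemma indep:
  fixes x xp q :: point
  assumes nc: "\<not> collinear {x, xp, q}" and eq: "a *\<^sub>R (xp - x) + b *\<^sub>R (q - x) = 0"
  shows "a = 0 \<and> b = 0"
proof (rule ccontr)
  assume "\<not> (a = 0 \<and> b = 0)"
  then consider "a \<noteq> 0" | "b \<noteq> 0" by blast
  then show False
  proof cases
    case 1
    have "xp - x = (1/a) *\<^sub>R (a *\<^sub>R (xp - x))" using 1 by simp
    also have "a *\<^sub>R (xp - x) = - (b *\<^sub>R (q - x))" using eq by (simp add: eq_neg_iff_add_eq_0)
    finally have "xp - x = (- b / a) *\<^sub>R (q - x)" by simp
    then have "collinear {x, q, xp}" by (rule col_of)
    moreover have "{x, q, xp} = {x, xp, q}" by auto
    ultimately show False using nc by simp
  next
    case 2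
    have "q - x = (1/b) *\<^sub>R (b *\<^sub>R (q - x))" using 2 by simp
    also have "b *\<^sub>R (q - x) = - (a *\<^sub>R (xp - x))" using eq by (simp add: eq_neg_iff_add_eq_0 add.commute)
    finally have "q - x = (- a / b) *\<^sub>R (xp - x)" by simp
    then have "collinear {x, xp, q}" by (rule col_of)
    then show False using nc by simp
  qed
qed

lemma cone_sub:
  assumes "p \<in> cone x xp q"
  shows "cone x xp p \<subseteq> cone x xp q"
proof
  fix z assume "z \<in> cone x xp p"
  then obtain c d where cd: "0 < c" "0 < d" "z = x + c *\<^sub>R (xp - x) + d *\<^sub>R (p - x)"
    unfolding cone_def by blast
  from assms obtain a b where ab: "0 < a" "0 < b" "p = x + a *\<^sub>R (xp - x) + b *\<^sub>R (q - x)"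
    unfolding cone_def by blast
  have pd: "p - x = a *\<^sub>R (xp - x) + b *\<^sub>R (q - x)" using ab(3) by simp
  have "z = x + c *\<^sub>R (xp - x) + d *\<^sub>R (a *\<^sub>R (xp - x) + b *\<^sub>R (q - x))"
    using cd(3) by (simp only: pd)
  also have "\<dots> = x + (c + d * a) *\<^sub>R (xp - x) + (d * b) *\<^sub>R (q - x)"
    by (simp add: algebra_simps)
  finally have "z = x + (c + d * a) *\<^sub>R (xp - x) + (d * b) *\<^sub>R (q - x)" .
  moreover have "0 < d * a" "0 < d * b" using ab(1,2) cd(2) by (simp_all add: mult_pos_pos)
  moreover have "0 < c + d * a" using \<open>0 < d * a\<close> cd(1) by linarith
  ultimately show "z \<in> cone x xp q" unfolding cone_def by blast
qed

lemma cone_notin: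
  assumes nc: "\<not> collinear {x, xp, p}"
  shows "p \<notin> cone x xp p"
proof
  assume "p \<in> cone x xp p"
  then obtain c d where cd: "0 < c" "0 < d" "p = x + c *\<^sub>R (xp - x) + d *\<^sub>R (p - x)"
    unfolding cone_def by blast
  have "c *\<^sub>R (xp - x) + (d - 1) *\<^sub>R (p - x) = 0"
  proof -
    have h0: "p - x = (x + c *\<^sub>R (xp - x) + d *\<^sub>R (p - x)) - x"
      using arg_cong[OF cd(3), of "\<lambda>w. w - x"] .
    have h: "p - x = c *\<^sub>R (xp - x) + d *\<^sub>R (p - x)"
      using h0 by (simp only: add_diff_cancel_left' add.assoc)
    have "c *\<^sub>R (xp - x) + (d - 1) *\<^sub>R (p - x) = (c *\<^sub>R (xp - x) + d *\<^sub>R (p - x)) - (p - x)"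
      by (simp add: algebra_simps)
    also have "\<dots> = 0" by (simp only: h[symmetric]) simp
    finally show ?thesis .
  qed
  from indep[OF nc this] cd show False by simp
qed

lemma x_notin:
  assumes nc: "\<not> collinear {x, xp, q}"
  shows "x \<notin> cone x xp q"
proof
  assume "x \<in> cone x xp q"
  then obtain a b where ab: "0 < a" "0 < b" "x = x + a *\<^sub>R (xp - x) + b *\<^sub>R (q - x)"
    unfolding cone_def by blast
  have "a *\<^sub>R (xp - x) + b *\<^sub>R (q - x) = 0" using ab(3) by (simp add: algebra_simps)
  from indep[OF nc this] ab show False by simp
qed

lemma q_notin:
  assumes nc: "\<not> collinear {x, xp, q}"
  shows "q \<notin> cone x xp q"
proof
  assume "q \<in> cone x xp q"
  then obtain a b where ab: "0 < a" "0 < b" "q = x + a *\<^sub>R (xp - x) + b *\<^sub>R (q - x)"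
    unfolding cone_def by blast
  have h0: "q - x = (x + a *\<^sub>R (xp - x) + b *\<^sub>R (q - x)) - x"
    using arg_cong[OF ab(3), of "\<lambda>w. w - x"] .
  have h: "q - x = a *\<^sub>R (xp - x) + b *\<^sub>R (q - x)"
    using h0 by (simp only: add_diff_cancel_left' add.assoc)
  have "a *\<^sub>R (xp - x) + (b - 1) *\<^sub>R (q - x) = (a *\<^sub>R (xp - x) + b *\<^sub>R (q - x)) - (q - x)"
    by (simp add: algebra_simps)
  also have "\<dots> = 0" by (simp only: h[symmetric]) simp
  finally have "a *\<^sub>R (xp - x) + (b - 1) *\<^sub>R (q - x) = 0" .
  from indep[OF nc this] ab show False by simp
qed

lemma fan_sep:
  assumes gp: "general_position P" and xP: "x \<in> P" and xpP: "xp \<in> P" and qP: "q \<in> P"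
    and d1: "x \<noteq> xp" and d2: "x \<noteq> q" and d3: "xp \<noteq> q"
    and pP: "p \<in> P" and p1: "p \<noteq> x" and p2: "p \<noteq> q" and p3: "p \<noteq> xp"
    and pc: "p \<notin> cone x xp q"
    and s: "s = xp \<or> s \<in> cone x xp q"
  shows "closed_segment x p \<inter> closed_segment q s = {}"
proof (rule ccontr)
  assume "closed_segment x p \<inter> closed_segment q s \<noteq> {}"
  then obtain z where z1: "z \<in> closed_segment x p" and z2: "z \<in> closed_segment q s" by blast
  have nc: "\<not> collinear {x, xp, q}" using gpD[OF gp xP xpP qP d1 d2 d3] .
  obtain as bs where sab: "s = x + as *\<^sub>R (xp - x) + bs *\<^sub>R (q - x)" "0 \<le> as" "0 \<le> bs"
    "bs = 0 \<longrightarrow> as = 1"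
  proof (cases "s = xp")
    case True
    then show ?thesis using that[of 1 0] by simp
  next
    case False
    then have "s \<in> cone x xp q" using s by blast
    then obtain a b where "0 < a" "0 < b" "s = x + a *\<^sub>R (xp - x) + b *\<^sub>R (q - x)"
      unfolding cone_def by blast
    then show ?thesis using that[of a b] by simp
  qed
  from z2 obtain t where t: "0 \<le> t" "t \<le> 1" "z = (1 - t) *\<^sub>R q + t *\<^sub>R s" by (auto simp: in_segment)
  from z1 obtain \<tau> where tau: "0 \<le> \<tau>" "\<tau> \<le> 1" "z = (1 - \<tau>) *\<^sub>R x + \<tau> *\<^sub>R p" by (auto simp: in_segment)
  define A where "A = t * as"
  define C where "C = (1 - t) + t * bs"
  have zA: "z - x = A *\<^sub>R (xp - x) + C *\<^sub>R (q - x)"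
  proof -
    have "z - x = (1 - t) *\<^sub>R (q - x) + t *\<^sub>R (s - x)" using t(3) by (simp add: algebra_simps)
    also have "s - x = as *\<^sub>R (xp - x) + bs *\<^sub>R (q - x)" using sab(1) by simp
    finally show ?thesis unfolding A_def C_def by (simp add: algebra_simps)
  qed
  have A0: "0 \<le> A" unfolding A_def using t sab by simp
  have C0: "0 \<le> C" unfolding C_def using t sab by simp
  have AC: "A \<noteq> 0 \<or> C \<noteq> 0"
  proof (rule ccontr)
    assume "\<not> (A \<noteq> 0 \<or> C \<noteq> 0)"
    then have "A = 0" "C = 0" by auto
    have "0 \<le> t * bs" using t sab by simp
    then have "1 - t = 0" "t * bs = 0" using \<open>C = 0\<close> t unfolding C_def by linarith+
    then have "t = 1" "bs = 0" by auto
    then have "as = 1" using sab by simp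
    then show False using \<open>A = 0\<close> \<open>t = 1\<close> unfolding A_def by simp
  qed
  have zt: "z - x = \<tau> *\<^sub>R (p - x)" using tau(3) by (simp add: algebra_simps)
  show False
  proof (cases "\<tau> = 0")
    case True
    then have "A *\<^sub>R (xp - x) + C *\<^sub>R (q - x) = 0" using zA zt by simp
    from indep[OF nc this] AC show False by simp
  next
    case False
    have "p - x = (1/\<tau>) *\<^sub>R (\<tau> *\<^sub>R (p - x))" using False by simp
    also have "\<dots> = (A/\<tau>) *\<^sub>R (xp - x) + (C/\<tau>) *\<^sub>R (q - x)" using zA zt by (simp add: scaleR_add_right)
    finally have pe: "p - x = (A/\<tau>) *\<^sub>R (xp - x) + (C/\<tau>) *\<^sub>R (q - x)" .
    have tpos: "0 < \<tau>" using False tau by simp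
    consider "A = 0" | "C = 0" | "0 < A \<and> 0 < C" using A0 C0 by linarith
    then show False
    proof cases
      case 1
      then have "p - x = (C/\<tau>) *\<^sub>R (q - x)" using pe by simp
      then have "collinear {x, q, p}" by (rule col_of)
      moreover have "\<not> collinear {x, q, p}" using gpD[OF gp xP qP pP d2 p1[symmetric] p2[symmetric]] .
      ultimately show False by simp
    next
      case 2
      then have "p - x = (A/\<tau>) *\<^sub>R (xp - x)" using pe by simp
      then have "collinear {x, xp, p}" by (rule col_of)
      moreover have "\<not> collinear {x, xp, p}" using gpD[OF gp xP xpP pP d1 p1[symmetric] p3[symmetric]] .
      ultimately show False by simp
    next
      case 3
      then have "0 < A/\<tau>" "0 < C/\<tau>" using tpos by auto
      moreover have "p = x + (A/\<tau>) *\<^sub>R (xp - x) + (C/\<tau>) *\<^sub>R (q - x)" using pe by (simp add: algebra_simps)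
      ultimately have "p \<in> cone x xp q" unfolding cone_def by blast
      then show False using pc by simp
    qed
  qed
qed



lemma edge_other:
  assumes "e \<in> complete_edges V" "x \<in> e"
  shows "\<exists>y. e = {x,y} \<and> y \<in> V \<and> x \<noteq> y"
proof -
  obtain p r where pr: "e = {p,r}" "p \<in> V" "r \<in> V" "p \<noteq> r" using complete_edgeE[OF assms(1)] by blast
  show ?thesis
  proof (cases "x = p")
    case True then show ?thesis using pr by blast
  next
    case False then have "x = r" using assms(2) pr(1) by blast
    then show ?thesis using pr by (metis insert_commute)
  qed
qed

lemma edge2: "{a,b} \<in> complete_edges V \<Longrightarrow> a \<in> V \<and> b \<in> V \<and> a \<noteq> b"
proof -
  assume "{a,b} \<in> complete_edges V"
  then obtain p r where pr: "{a,b} = {p,r}" "p \<in> V" "r \<in> V" "p \<noteq> r" using complete_edgeE by blast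
  then show ?thesis by (auto simp: doubleton_eq_iff)
qed

theorem proposition2:
  fixes P :: "(real \<times> real) set" and B :: "(real \<times> real) set set"
  assumes "finite P" and "general_position P"
    and "is_blocker P (simple_trees_diam_le P 3) B"
  shows "spanning_tree P B"
proof -
  note fin = assms(1) and gp = assms(2)
  let ?F = "simple_trees_diam_le P 3"
  have BP: "B \<subseteq> complete_edges P" and blk: "blocks ?F B"
    and mn: "\<And>B'. B' \<subseteq> complete_edges P \<Longrightarrow> blocks ?F B' \<Longrightarrow> card B \<le> card B'"
    using assms(3) unfolding is_blocker_def by auto
  have fB: "finite B" using finite_complete_edges[OF fin] BP finite_subset by blast
  have two: "2 \<le> card P"
  proof (rule ccontr)
    assume "\<not> 2 \<le> card P"
    then have "card P \<le> Suc 0" by simp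
    then have uv: "\<forall>u\<in>P. \<forall>v\<in>P. u = v" using card_le_Suc0_iff_eq[OF fin] by blast
    have "{} \<in> ?F"
      unfolding simple_trees_diam_le_def spanning_tree_def connected_graph_def diameter_le_def
        non_crossing_def has_cycle_def
    proof (intro CollectI conjI ballI)
      fix u v assume "u \<in> P" "v \<in> P"
      then have "u = v" using uv by blast
      then show "\<exists>xs. walk {} xs \<and> hd xs = u \<and> last xs = v" by (intro exI[of _ "[u]"]) simp
    next
      fix u v assume "u \<in> P" "v \<in> P"
      then have "u = v" using uv by blast
      then show "\<exists>xs. walk {} xs \<and> hd xs = u \<and> last xs = v \<and> length xs \<le> 3 + 1"
        by (intro exI[of _ "[u]"]) simp
    qed auto
    then show False using blk unfolding blocks_def by blast
  qed
  then have "P \<noteq> {}" by (metis card.empty not_numeral_le_zero)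
  then obtain v0 where v0: "v0 \<in> P" by blast
  have "card (P - {v0}) \<ge> 1" using two v0 fin by simp
  then have "P - {v0} \<noteq> {}" by (metis card.empty not_one_le_zero)
  then obtain w0 where w0: "w0 \<in> P" "w0 \<noteq> v0" by blast
  define S where "S = (\<lambda>p. {v0,p}) ` (P - {v0})"
  have SP: "S \<subseteq> complete_edges P" unfolding S_def complete_edges_def using v0 by blast
  have Sblk: "blocks ?F S"
    unfolding blocks_def
  proof
    fix T assume "T \<in> ?F"
    then have TP: "T \<subseteq> complete_edges P" and con: "connected_graph P T"
      unfolding simple_trees_diam_le_def spanning_tree_def by auto
    obtain xs where xs: "walk T xs" "hd xs = v0" "last xs = w0"
      using con v0 w0 unfolding connected_graph_def by blast
    have eT: "{v0, xs!1} \<in> T" using walk_first_edge[OF xs(1)] xs w0 by simp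
    then have "xs!1 \<in> P \<and> v0 \<noteq> xs!1" using edge2 TP by blast
    then have "{v0, xs!1} \<in> S" unfolding S_def by blast
    then show "S \<inter> T \<noteq> {}" using eT by blast
  qed
  have cS: "card S \<le> card P - 1"
  proof -
    have "card S \<le> card (P - {v0})" unfolding S_def using fin by (intro card_image_le) simp
    also have "\<dots> = card P - 1" using v0 fin by simp
    finally show ?thesis .
  qed
  have cB: "card B < card P" using mn[OF SP Sblk] cS two by linarith
  show ?thesis
  proof (rule ccontr)
    assume nst: "\<not> spanning_tree P B"
    have ncon: "\<not> connected_graph P B"
    proof
      assume con: "connected_graph P B"
      then have "has_cycle B" using nst BP unfolding spanning_tree_def by blast
      from conn_cycle[OF fin BP con this] cB show False by simp
    qed
    obtain x where xP: "x \<in> P" and dx: "card {e\<in>B. x\<in>e} \<le> 1"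
      using low_degree[OF fin BP cB] by blast
    define R where "R y \<longleftrightarrow> (\<exists>xs. walk B xs \<and> hd xs = x \<and> last xs = y)" for y
    define Y where "Y = {y \<in> P. \<not> R y}"
    have Rx: "R x" unfolding R_def by (intro exI[of _ "[x]"]) simp
    have Rstep: "R q" if "R s" "{s,q} \<in> B" for s q
    proof -
      from that(1) obtain xs where xs: "walk B xs" "hd xs = x" "last xs = s" unfolding R_def by blast
      have ne: "xs \<noteq> []" using xs(1) by (simp add: walk_def)
      have "walk B (xs @ [q])" using walk_append[OF xs(1) walk_single[of B q]] xs that(2) by simp
      moreover have "hd (xs @ [q]) = x" using ne xs by simp
      moreover have "last (xs @ [q]) = q" by simp
      ultimately show ?thesis unfolding R_def by blast
    qed
    have Yne: "Y \<noteq> {}"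
    proof
      assume Y0: "Y = {}"
      from ncon obtain u w where uw: "u \<in> P" "w \<in> P"
        and nw: "\<not> (\<exists>xs. walk B xs \<and> hd xs = u \<and> last xs = w)"
        unfolding connected_graph_def by blast
      have "\<forall>y\<in>P. R y" using Y0 unfolding Y_def by blast
      then have "R u" "R w" using uw by blast+
      then obtain xs1 xs2 where x1: "walk B xs1" "hd xs1 = x" "last xs1 = u"
        and x2: "walk B xs2" "hd xs2 = x" "last xs2 = w" unfolding R_def by blast
      have ne: "xs1 \<noteq> []" "xs2 \<noteq> []" using x1 x2 by (auto simp: walk_def)
      have "walk B (rev xs1 @ tl xs2)"
        using walk_join[OF walk_rev[OF x1(1)] x2(1)] x1 x2 ne by (simp add: last_rev)
      moreover have "hd (rev xs1 @ tl xs2) = u" using ne x1 by (simp add: hd_rev)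
      moreover have "last (rev xs1 @ tl xs2) = w"
        using last_join[of xs2 "rev xs1"] ne x1 x2 by (simp add: last_rev)
      ultimately show False using nw by blast
    qed
    have xY: "x \<notin> Y" using Rx unfolding Y_def by blast
    have fY: "finite Y" using fin unfolding Y_def by simp
    show False
    proof (cases "card {e\<in>B. x\<in>e} = 0")
      case True
      then have nox: "\<forall>e\<in>B. x \<notin> e" using fB by simp
      have "card (P - {x}) \<ge> 1" using two xP fin by simp
      then have "P - {x} \<noteq> {}" by (metis card.empty not_one_le_zero)
      then obtain d where dP: "d \<in> P" "d \<noteq> x" by blast
      interpret DS P x d "P - {x,d}" "{}"
        by unfold_locales (use xP dP in auto)
      have "dstar x d (P - {x,d}) {} \<in> ?F" using T_in[OF gp] by simp
      moreover have "dstar x d (P - {x,d}) {} \<inter> B = {}"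
        using nox unfolding dstar_def by blast
      ultimately show False using blk unfolding blocks_def by blast
    next
      case False
      with dx have "card {e\<in>B. x\<in>e} = 1" by simp
      then obtain e0 where e0: "{e\<in>B. x\<in>e} = {e0}" using card_1_singletonE by blast
      then have e0B: "e0 \<in> B" and xe0: "x \<in> e0" by auto
      obtain xp where e0x: "e0 = {x, xp}" and xpP: "xp \<in> P" and xxp: "x \<noteq> xp"
        using edge_other[of e0 P x] e0B BP xe0 by blast
      have uniq: "\<forall>e\<in>B. x \<in> e \<longrightarrow> e = {x, xp}" using e0 e0x by blast
      have nbx: "\<And>z. {x, z} \<in> B \<Longrightarrow> z = xp" using leaf_nb[OF uniq xxp] by blast
      have Rxp: "R xp" using Rstep[OF Rx] e0B e0x by blast
      have xpY: "xp \<notin> Y" using Rxp unfolding Y_def by blast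
      obtain y0 where y0: "y0 \<in> Y" using Yne by blast
      obtain q where qY: "q \<in> Y"
        and qmin: "\<And>q'. q' \<in> Y \<Longrightarrow> card (Y \<inter> cone x xp q) \<le> card (Y \<inter> cone x xp q')"
        using ex_has_least_nat[of "\<lambda>q. q \<in> Y" y0 "\<lambda>q. card (Y \<inter> cone x xp q)"] y0 by blast
      have qP: "q \<in> P" using qY unfolding Y_def by simp
      have qx: "q \<noteq> x" using qY xY by blast
      have qxp: "q \<noteq> xp" using qY xpY by blast
      have qfree: "Y \<inter> cone x xp q = {}"
      proof (rule ccontr)
        assume "Y \<inter> cone x xp q \<noteq> {}"
        then obtain p where pY: "p \<in> Y" and pc: "p \<in> cone x xp q" by blast
        have pP: "p \<in> P" using pY unfolding Y_def by simp
        have "p \<noteq> x" "p \<noteq> xp" using pY xY xpY by blast+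
        then have nc: "\<not> collinear {x, xp, p}" using gpD[OF gp xP xpP pP xxp] by blast
        have "Y \<inter> cone x xp p \<subset> Y \<inter> cone x xp q"
          using cone_sub[OF pc] cone_notin[OF nc] pY pc by blast
        then have "card (Y \<inter> cone x xp p) < card (Y \<inter> cone x xp q)"
          using fY by (intro psubset_card_mono) auto
        with qmin[OF pY] show False by simp
      qed
      have ncq: "\<not> collinear {x, xp, q}" using gpD[OF gp xP xpP qP xxp qx[symmetric] qxp[symmetric]] .
      define Ld where "Ld = insert xp (P \<inter> cone x xp q)"
      define Lc where "Lc = P - {x,q} - Ld"
      have LdP: "Ld \<subseteq> P - {x,q}"
        unfolding Ld_def using xpP xxp qxp x_notin[OF ncq] q_notin[OF ncq] by blast
      interpret DS P x q Lc Ld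
        by unfold_locales (use xP qP qx LdP in \<open>auto simp: Lc_def\<close>)
      have sep: "\<forall>p\<in>Lc. \<forall>s\<in>Ld. closed_segment x p \<inter> closed_segment q s = {}"
      proof (intro ballI)
        fix p s assume p: "p \<in> Lc" and s: "s \<in> Ld"
        have pP: "p \<in> P" and p1: "p \<noteq> x" and p2: "p \<noteq> q" and p3: "p \<noteq> xp"
          and pc: "p \<notin> cone x xp q" using p unfolding Lc_def Ld_def by auto
        have "s = xp \<or> s \<in> cone x xp q" using s unfolding Ld_def by blast
        then show "closed_segment x p \<inter> closed_segment q s = {}"
          using fan_sep[OF gp xP xpP qP xxp qx[symmetric] qxp[symmetric] pP p1 p2 p3 pc] by blast
      qed
      have TF: "dstar x q Lc Ld \<in> ?F" using T_in[OF gp sep] .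
      have "dstar x q Lc Ld \<inter> B = {}"
      proof (rule ccontr)
        assume "dstar x q Lc Ld \<inter> B \<noteq> {}"
        then obtain e where eT: "e \<in> dstar x q Lc Ld" and eB: "e \<in> B" by blast
        from edge_cases[OF eT] show False
        proof (elim disjE bexE)
          assume "e = {x,q}" then show False using eB nbx qxp by blast
        next
          fix p assume "p \<in> Lc" "e = {x,p}"
          then have "p = xp" using eB nbx by blast
          then show False using \<open>p \<in> Lc\<close> unfolding Lc_def Ld_def by blast
        next
          fix s assume sL: "s \<in> Ld" and es: "e = {q,s}"
          have sP: "s \<in> P" using sL LdP by blast
          have "s \<notin> Y" using sL qfree xpY unfolding Ld_def by blast
          then have "R s" using sP unfolding Y_def by blast
          moreover have "{s,q} \<in> B" using eB es by (simp add: insert_commute)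
          ultimately have "R q" by (rule Rstep)
          then show False using qY unfolding Y_def by blast
        qed
      qed
      then show False using TF blk unfolding blocks_def by blast
    qed
  qed
qed

end
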